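(* Let $A$ be a finite alphabet and let $w\in A^{+}$ with $|w|\le 2$. Then for every integer $k\ge0$ the language $\mathrm{Count}(w,k)$ has generalised star-height $0$, and for all integers $n\ge2$ and $0\le k<n$ the language $\mathrm{ModCount}(w,k,n)$ has generalised star-height at most $1$.
   Context: Generalised regular expressions over $A$: $\emptyset$, $\varepsilon$ and each letter are expressions; if $E,F$ are expressions so are $E\cup F$, $EF$, $E^{\ast}$, $E^{c}$ (complement in $A^{\ast}$). Star-height: $h(\emptyset)=h(\varepsilon)=h(a)=0$, $h(E\cup F)=h(EF)=\max\{h(E),h(F)\}$, $h(E^{\ast})=h(E)+1$, $h(E^{c})=h(E)$; the star-height of a language is the minimum of $h(E)$ over expressions $E$ representing it. For $w\in A^{+}$ and $v\in A^{\ast}$, $|v|_{w}$ is the number of factorisations $v=xwy$ with $x,y\in A^{\ast}$ (overlapping occurrences counted separately). $\mathrm{Count}(w,k)=\{v\in A^{\ast}:|v|_{w}=k\}$ for $k\ge0$; $\mathrm{ModCount}(w,k,n)=\{v\in A^{\ast}:|v|_{w}\equiv k\pmod n\}$ for $n\ge2$, $0\le k<n$. *)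

theory Defs
  imports Main
begin

datatype 'a gre =
    Empty
  | Eps
  | Letter 'a
  | Union "'a gre" "'a gre"
  | Concat "'a gre" "'a gre"
  | Star "'a gre"
  | Compl "'a gre"

fun lang :: "'a set \<Rightarrow> 'a gre \<Rightarrow> 'a list set" where
  "lang A Empty = {}"
| "lang A Eps = {[]}"
| "lang A (Letter a) = {[a]}"
| "lang A (Union E F) = lang A E \<union> lang A F"
| "lang A (Concat E F) = {u @ v | u v. u \<in> lang A E \<and> v \<in> lang A F}"
| "lang A (Star E) = {concat us | us. \<forall>u\<in>set us. u \<in> lang A E}"
| "lang A (Compl E) = lists A - lang A E"

fun letters :: "'a gre \<Rightarrow> 'a set" where
  "letters Empty = {}"
| "letters Eps = {}"
| "letters (Letter a) = {a}"
| "letters (Union E F) = letters E \<union> letters F"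
| "letters (Concat E F) = letters E \<union> letters F"
| "letters (Star E) = letters E"
| "letters (Compl E) = letters E"

definition expr_over :: "'a set \<Rightarrow> 'a gre \<Rightarrow> bool" where
  "expr_over A E \<longleftrightarrow> letters E \<subseteq> A"

fun height :: "'a gre \<Rightarrow> nat" where
  "height Empty = 0"
| "height Eps = 0"
| "height (Letter a) = 0"
| "height (Union E F) = max (height E) (height F)"
| "height (Concat E F) = max (height E) (height F)"
| "height (Star E) = height E + 1"
| "height (Compl E) = height E"

definition star_height :: "'a set \<Rightarrow> 'a list set \<Rightarrow> nat" where
  "star_height A L = (LEAST h. \<exists>E. expr_over A E \<and> lang A E = L \<and> height E = h)"

definition occ :: "'a list \<Rightarrow> 'a list \<Rightarrow> nat" where
  "occ w v = card {(x, y). v = x @ w @ y}"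

definition Count :: "'a set \<Rightarrow> 'a list \<Rightarrow> nat \<Rightarrow> 'a list set" where
  "Count A w k = {v \<in> lists A. occ w v = k}"

definition ModCount :: "'a set \<Rightarrow> 'a list \<Rightarrow> nat \<Rightarrow> nat \<Rightarrow> 'a list set" where
  "ModCount A w k n = {v \<in> lists A. occ w v mod n = k}"

end

theory Submission
  imports Defs
begin

lemma occ_finite: "finite {(x, y). v = x @ w @ y}"
proof (rule finite_subset)
  show "{(x, y). v = x @ w @ y} \<subseteq> (\<lambda>i. (take i v, drop (i + length w) v)) ` {..length v}"
  proof
    fix p assume "p \<in> {(x, y). v = x @ w @ y}"
    then obtain x y where p: "p = (x,y)" "v = x @ w @ y" by auto
    then show "p \<in> (\<lambda>i. (take i v, drop (i + length w) v)) ` {..length v}"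
      by (intro image_eqI[of _ _ "length x"]) auto
  qed
qed auto

lemma occ_Nil: "w \<noteq> [] \<Longrightarrow> occ w [] = 0"
  by (simp add: occ_def)

lemma occ_Cons: fixes w :: "'a list" assumes "w \<noteq> []"
  shows "occ w (c#v) = (if take (length w) (c#v) = w then 1 else 0) + occ w v"
proof -
  let ?S = "\<lambda>v. {(x, y). v = x @ w @ y}"
  have eq: "?S (c#v) = {(x::'a list,y). x = [] \<and> c#v = w@y} \<union> (\<lambda>(x,y). (c#x, y)) ` ?S v"
    apply (auto simp: Cons_eq_append_conv image_iff)
    done
  have d: "{(x::'a list,y). x = [] \<and> c#v = w@y} \<inter> (\<lambda>(x,y). (c#x, y)) ` ?S v = {}" by auto
  have i: "inj_on (\<lambda>(x,y). (c#x, y)) (?S v)" by (auto simp: inj_on_def)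
  have f1: "finite {(x::'a list,y). x = [] \<and> c#v = w@y}"
  proof -
    have "{(x::'a list,y). x = [] \<and> c#v = w@y} \<subseteq> {(x,y). c#v = x@w@y}" by auto
    then show ?thesis by (rule finite_subset) (rule occ_finite)
  qed
  have c1: "card {(x::'a list,y). x = [] \<and> c#v = w@y} = (if take (length w) (c#v) = w then 1 else 0)"
  proof (cases "take (length w) (c#v) = w")
    case True
    then have "{(x::'a list,y). x = [] \<and> c#v = w@y} = {([], drop (length w) (c#v))}"
      by (auto, metis append_take_drop_id)
    then show ?thesis using True by simp
  next
    case False
    then have "{(x::'a list,y). x = [] \<and> c#v = w@y} = {}" by auto
    then show ?thesis using False by simp
  qed
  have "occ w (c#v) = card ({(x::'a list,y). x = [] \<and> c#v = w@y} \<union> (\<lambda>(x,y). (c#x, y)) ` ?S v)"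
    unfolding occ_def using eq by simp
  also have "\<dots> = card {(x::'a list,y). x = [] \<and> c#v = w@y} + card ((\<lambda>(x,y). (c#x, y)) ` ?S v)"
    by (rule card_Un_disjoint[OF f1 finite_imageI[OF occ_finite] d])
  also have "\<dots> = (if take (length w) (c#v) = w then 1 else 0) + occ w v"
    using c1 card_image[OF i] by (simp add: occ_def)
  finally show ?thesis .
qed

lemma occ_suffix_le: "w \<noteq> [] \<Longrightarrow> occ w y \<le> occ w (u @ y)"
  by (induction u) (auto simp: occ_Cons)

lemma occ_pos_iff: "0 < occ w v \<longleftrightarrow> (\<exists>x y. v = x @ w @ y)"
  unfolding occ_def using occ_finite[of v w] by (auto simp: card_gt_0_iff)

lemma last_occ:
  assumes "w \<noteq> []" "0 < occ w v"
  shows "\<exists>x y. v = x @ w @ y \<and> occ w (tl (w @ y)) = 0"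
  using assms(2)
proof (induction v)
  case Nil then show ?case using assms(1) by (simp add: occ_Nil)
next
  case (Cons c v)
  show ?case
  proof (cases "0 < occ w v")
    case True
    then obtain x y where "v = x @ w @ y \<and> occ w (tl (w @ y)) = 0" using Cons.IH by blast
    then show ?thesis by (intro exI[of _ "c#x"] exI[of _ y]) auto
  next
    case False
    then have "take (length w) (c#v) = w" using Cons.prems occ_Cons[OF assms(1), of c v]
      by (auto split: if_splits)
    then have e: "c#v = w @ drop (length w) (c#v)" by (metis append_take_drop_id)
    then have "tl (w @ drop (length w) (c#v)) = v" by (metis list.sel(3))
    then show ?thesis using e False by (intro exI[of _ "[]"] exI[of _ "drop (length w) (c#v)"]) auto
  qed
qed

lemma occ1_app: "occ [a] (u @ v) = occ [a] u + occ [a] v"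
  by (induction u) (auto simp: occ_Cons occ_Nil)

lemma occ2_app: "occ [a,b] (u @ v) = occ [a,b] u + occ [a,b] v
   + (if u \<noteq> [] \<and> v \<noteq> [] \<and> last u = a \<and> hd v = b then 1 else 0)"
proof (induction u)
  case Nil then show ?case by (simp add: occ_Nil)
next
  case (Cons c u)
  show ?case
  proof (cases u)
    case Nil
    then show ?thesis by (cases v) (auto simp: occ_Cons occ_Nil)
  next
    case (Cons d u')
    then show ?thesis using Cons.IH by (auto simp: occ_Cons occ_Nil)
  qed
qed

definition conc :: "'a list set \<Rightarrow> 'a list set \<Rightarrow> 'a list set" where
  "conc X Y = {u @ v | u v. u \<in> X \<and> v \<in> Y}"

primrec pw :: "'a list set \<Rightarrow> nat \<Rightarrow> 'a list set" where
  "pw X 0 = {[]}"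
| "pw X (Suc n) = conc (pw X n) X"

definition star :: "'a list set \<Rightarrow> 'a list set" where
  "star X = {concat us | us. \<forall>u\<in>set us. u \<in> X}"

lemma conc_assoc: "conc (conc X Y) Z = conc X (conc Y Z)"
  unfolding conc_def by (auto, metis append_assoc, metis append_assoc)

lemma conc_Nil_right[simp]: "conc X {[]} = X"
  unfolding conc_def by auto

lemma conc_Nil_left[simp]: "conc {[]} X = X"
  unfolding conc_def by auto

lemma pw_add: "pw X (a + b) = conc (pw X a) (pw X b)"
  by (induction b) (simp_all add: conc_assoc)

lemma pw_mult: "pw (pw X n) i = pw X (n * i)"
proof (induction i)
  case 0 then show ?case by simp
next
  case (Suc i)
  have "pw (pw X n) (Suc i) = conc (pw X (n*i)) (pw X n)" using Suc by simp
  also have "\<dots> = pw X (n*i + n)" by (simp add: pw_add)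
  finally show ?case by (simp add: add.commute)
qed

lemma star_pw: "star X = (\<Union>i. pw X i)"
proof
  show "star X \<subseteq> (\<Union>i. pw X i)"
  proof
    fix v assume "v \<in> star X"
    then obtain us where v: "v = concat us" "\<forall>u\<in>set us. u \<in> X" unfolding star_def by auto
    have "concat us \<in> pw X (length us)" using v(2)
    proof (induction us rule: rev_induct)
      case Nil then show ?case by simp
    next
      case (snoc u us) then show ?case by (auto simp: conc_def)
    qed
    then show "v \<in> (\<Union>i. pw X i)" using v by auto
  qed
next
  show "(\<Union>i. pw X i) \<subseteq> star X"
  proof
    fix v assume "v \<in> (\<Union>i. pw X i)"
    then obtain i where "v \<in> pw X i" by auto
    then show "v \<in> star X"
    proof (induction i arbitrary: v)
      case 0 then show ?case unfolding star_def by (auto intro: exI[of _ "[]"])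
    next
      case (Suc i)
      then obtain p u where pu: "v = p @ u" "p \<in> pw X i" "u \<in> X" by (auto simp: conc_def)
      then obtain us where "p = concat us" "\<forall>u\<in>set us. u \<in> X" using Suc.IH unfolding star_def by auto
      then show ?case using pu unfolding star_def by (auto intro!: exI[of _ "us @ [u]"])
    qed
  qed
qed

lemma conc_UN_right: "conc X (\<Union>i. Y i) = (\<Union>i. conc X (Y i))"
  unfolding conc_def by blast

lemma conc_UN_left: "conc (\<Union>i. Y i) X = (\<Union>i. conc (Y i) X)"
  unfolding conc_def by blast

lemma lang_sub: "expr_over A E \<Longrightarrow> lang A E \<subseteq> lists A"
  by (induction E) (fastforce simp: expr_over_def)+

definition sf :: "'a set \<Rightarrow> 'a list set \<Rightarrow> bool" where
  "sf A L \<longleftrightarrow> (\<exists>E. expr_over A E \<and> height E = 0 \<and> lang A E = L)"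

definition h1 :: "'a set \<Rightarrow> 'a list set \<Rightarrow> bool" where
  "h1 A L \<longleftrightarrow> (\<exists>E. expr_over A E \<and> height E \<le> 1 \<and> lang A E = L)"

lemma sf_sub: "sf A L \<Longrightarrow> L \<subseteq> lists A"
  unfolding sf_def using lang_sub by blast

lemma sf_h1: "sf A L \<Longrightarrow> h1 A L"
  unfolding sf_def h1_def by force

lemma sf_eps: "sf A {[]}"
  unfolding sf_def by (intro exI[of _ Eps]) (simp add: expr_over_def)

lemma sf_letter: "a \<in> A \<Longrightarrow> sf A {[a]}"
  unfolding sf_def by (intro exI[of _ "Letter a"]) (simp add: expr_over_def)

lemma sf_union: "sf A X \<Longrightarrow> sf A Y \<Longrightarrow> sf A (X \<union> Y)"
  unfolding sf_def by (clarify, rule_tac x="Union E Ea" in exI) (simp add: expr_over_def)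

lemma sf_conc: "sf A X \<Longrightarrow> sf A Y \<Longrightarrow> sf A (conc X Y)"
  unfolding sf_def by (clarify, rule_tac x="Concat E Ea" in exI) (simp add: expr_over_def conc_def)

lemma sf_compl: "sf A X \<Longrightarrow> sf A (lists A - X)"
  unfolding sf_def by (clarify, rule_tac x="Compl E" in exI) (simp add: expr_over_def)

lemma sf_lists: "sf A (lists A)"
proof -
  have "sf A {}" unfolding sf_def by (intro exI[of _ Empty]) (simp add: expr_over_def)
  from sf_compl[OF this] show ?thesis by simp
qed

lemma sf_inter: assumes "sf A X" "sf A Y" shows "sf A (X \<inter> Y)"
proof -
  have "X \<inter> Y = lists A - ((lists A - X) \<union> (lists A - Y))"
    using sf_sub[OF assms(1)] sf_sub[OF assms(2)] by blast
  then show ?thesis using assms by (simp add: sf_compl sf_union)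
qed

lemma sf_pw: "sf A X \<Longrightarrow> sf A (pw X n)"
  by (induction n) (simp_all add: sf_eps sf_conc)

lemma sf_word: "w \<in> lists A \<Longrightarrow> sf A {w}"
proof (induction w)
  case Nil then show ?case by (simp add: sf_eps)
next
  case (Cons c w)
  have "{c # w} = conc {[c]} {w}" by (auto simp: conc_def)
  then show ?case using Cons by (simp add: sf_conc sf_letter)
qed

lemma h1_union: "h1 A X \<Longrightarrow> h1 A Y \<Longrightarrow> h1 A (X \<union> Y)"
  unfolding h1_def by (clarify, rule_tac x="Union E Ea" in exI) (simp add: expr_over_def)

lemma h1_conc: "h1 A X \<Longrightarrow> h1 A Y \<Longrightarrow> h1 A (conc X Y)"
  unfolding h1_def by (clarify, rule_tac x="Concat E Ea" in exI) (simp add: expr_over_def conc_def)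

lemma h1_star: "sf A X \<Longrightarrow> h1 A (star X)"
  unfolding sf_def h1_def by (clarify, rule_tac x="Star E" in exI) (simp add: expr_over_def star_def)

lemma sf_sh: "sf A L \<Longrightarrow> star_height A L = 0"
  unfolding sf_def star_height_def by (rule Least_eq_0) blast

lemma h1_sh: "h1 A L \<Longrightarrow> star_height A L \<le> 1"
proof -
  assume "h1 A L"
  then obtain E where E: "expr_over A E" "height E \<le> 1" "lang A E = L" unfolding h1_def by blast
  then have "(LEAST h. \<exists>E. expr_over A E \<and> lang A E = L \<and> height E = h) \<le> height E"
    by (intro Least_le) blast
  then show ?thesis using E(2) unfolding star_height_def by simp
qed

lemma mod_suc_iff:
  assumes "Suc j < n"
  shows "m mod n = Suc j \<longleftrightarrow> (\<exists>i. m = Suc (j + n * i))"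
proof
  assume "m mod n = Suc j"
  then have "m = Suc (j + n * (m div n))" by (metis add.commute add_Suc div_mult_mod_eq mult.commute)
  then show "\<exists>i. m = Suc (j + n * i)" by blast
next
  assume "\<exists>i. m = Suc (j + n * i)"
  then obtain i where "m = Suc j + n * i" by auto
  then show "m mod n = Suc j" using assms by simp
qed

lemma mod_zero_iff:
  assumes "0 < n"
  shows "m mod n = 0 \<longleftrightarrow> m = 0 \<or> (\<exists>i. m = Suc (n - 1 + n * i))"
proof
  assume "m mod n = 0"
  then obtain q where q: "m = n * q" by auto
  show "m = 0 \<or> (\<exists>i. m = Suc (n - 1 + n * i))"
  proof (cases q)
    case 0 then show ?thesis using q by simp
  next
    case (Suc i) then show ?thesis using q assms by (intro disjI2 exI[of _ i]) simp
  qed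
next
  assume "m = 0 \<or> (\<exists>i. m = Suc (n - 1 + n * i))"
  then show "m mod n = 0"
  proof
    assume "\<exists>i. m = Suc (n - 1 + n * i)"
    then obtain i where "m = n * Suc i" using assms by auto
    then show ?thesis by simp
  qed simp
qed

lemma assemble:
  assumes sfs: "sf A Z" "sf A P" "sf A M" "sf A L"
    and C0: "Count A w 0 = Z"
    and CS: "\<And>j. Count A w (Suc j) = conc (conc P (pw M j)) L"
  shows "(\<forall>k. sf A (Count A w k)) \<and> (\<forall>n k. 2 \<le> n \<longrightarrow> k < n \<longrightarrow> h1 A (ModCount A w k n))"
proof -
  have sfC: "sf A (Count A w k)" for k
  proof (cases k)
    case 0 then show ?thesis using C0 sfs by simp
  next
    case (Suc j) then show ?thesis using CS sfs by (simp add: sf_conc sf_pw)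
  qed
  define U where "U j n = conc (conc (conc P (pw M j)) (star (pw M n))) L" for j n
  have h1U: "h1 A (U j n)" for j n
    unfolding U_def using sfs by (intro h1_conc h1_star sf_h1 sf_conc sf_pw)
  have Ueq: "U j n = (\<Union>i. Count A w (Suc (j + n * i)))" for j n
  proof -
    have "star (pw M n) = (\<Union>i. pw M (n * i))" by (simp add: star_pw pw_mult)
    then have "conc (conc P (pw M j)) (star (pw M n)) = (\<Union>i. conc (conc P (pw M j)) (pw M (n*i)))"
      by (simp add: conc_UN_right)
    also have "\<dots> = (\<Union>i. conc P (pw M (j + n*i)))" by (simp add: conc_assoc pw_add)
    finally show ?thesis unfolding U_def by (simp add: conc_UN_left CS conc_assoc)
  qed
  have M1: "ModCount A w (Suc j) n = U j n" if "Suc j < n" for j n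
    unfolding Ueq ModCount_def Count_def using mod_suc_iff[OF that] by auto
  have M0: "ModCount A w 0 n = Count A w 0 \<union> U (n - 1) n" if "0 < n" for n
    unfolding Ueq ModCount_def Count_def using mod_zero_iff[OF that] by auto
  have "h1 A (ModCount A w k n)" if "2 \<le> n" "k < n" for n k
  proof (cases k)
    case 0 then show ?thesis using M0[of n] that h1U sfC by (simp add: h1_union sf_h1)
  next
    case (Suc j) then show ?thesis using M1[of j n] that h1U by simp
  qed
  then show ?thesis using sfC by blast
qed

lemma Count0_eq:
  assumes "w \<in> lists A"
  shows "Count A w 0 = lists A - conc (conc (lists A) {w}) (lists A)"
proof -
  have "v \<in> conc (conc (lists A) {w}) (lists A) \<longleftrightarrow> v \<in> lists A \<and> (\<exists>x y. v = x @ w @ y)" for v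
  proof
    assume "v \<in> conc (conc (lists A) {w}) (lists A)"
    then show "v \<in> lists A \<and> (\<exists>x y. v = x @ w @ y)" using assms unfolding conc_def by (auto, blast)
  next
    assume "v \<in> lists A \<and> (\<exists>x y. v = x @ w @ y)"
    then obtain x y where "v \<in> lists A" "v = x @ w @ y" by blast
    then show "v \<in> conc (conc (lists A) {w}) (lists A)" unfolding conc_def
      by (intro CollectI exI[of _ "x @ w"] exI[of _ y]) auto
  qed
  moreover have "occ w v = 0 \<longleftrightarrow> \<not> (\<exists>x y. v = x @ w @ y)" for v
    using occ_pos_iff[of w v] by (metis gr0I less_numeral_extra(3))
  ultimately show ?thesis unfolding Count_def by blast
qed

lemma sf_Count0: "w \<in> lists A \<Longrightarrow> sf A (Count A w 0)"
  by (simp add: Count0_eq sf_compl sf_conc sf_lists sf_word)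

lemma case_no:
  assumes w: "w \<in> lists A" "w \<noteq> []"
    and no: "\<And>u z. occ w (u @ w @ z) = occ w u + 1 + occ w z"
  shows "Count A w (Suc j) = conc (conc (Count A w 0) (pw (conc {w} (Count A w 0)) j)) (conc {w} (Count A w 0))"
proof -
  let ?Z = "Count A w 0" let ?M = "conc {w} (Count A w 0)"
  have step: "conc (Count A w j) ?M = Count A w (Suc j)" for j
  proof
    show "conc (Count A w j) ?M \<subseteq> Count A w (Suc j)"
      unfolding conc_def Count_def using no w by auto
  next
    show "Count A w (Suc j) \<subseteq> conc (Count A w j) ?M"
    proof
      fix v assume v: "v \<in> Count A w (Suc j)"
      then obtain x y where xy: "v = x @ w @ y" "occ w (tl (w @ y)) = 0"
        using last_occ[OF w(2), of v] unfolding Count_def by auto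
      have "tl (w @ y) = tl w @ y" using w(2) by simp
      then have "occ w y = 0" using xy(2) occ_suffix_le[OF w(2), of y "tl w"] by simp
      moreover have "occ w x = j" using v xy no[of x y] \<open>occ w y = 0\<close> unfolding Count_def by simp
      moreover have "x \<in> lists A" "y \<in> lists A" using v xy unfolding Count_def by auto
      ultimately show "v \<in> conc (Count A w j) ?M" unfolding conc_def Count_def using xy(1) by blast
    qed
  qed
  have Q: "conc ?Z (pw ?M j) = Count A w j" for j
  proof (induction j)
    case 0 then show ?case by simp
  next
    case (Suc j)
    have "conc ?Z (pw ?M (Suc j)) = conc (conc ?Z (pw ?M j)) ?M" by (simp add: conc_assoc)
    then show ?case using Suc step by simp
  qed
  show ?thesis using Q step by simp
qed

lemma occ_aa_split:
  assumes "q \<noteq> []" "m \<noteq> []" "last q = a" "hd m = a"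
  shows "occ [a,a] (q @ m) = occ [a,a] q + occ [a,a] m + 1"
  using assms occ2_app[of a a q m] by simp

lemma case_aa:
  assumes a: "a \<in> A"
  defines "Z \<equiv> Count A [a,a] 0" and "E \<equiv> conc (lists A) {[a]}" and "S \<equiv> conc {[a]} (lists A)"
  shows "Count A [a,a] (Suc j) = conc (conc (Z \<inter> E) (pw (Z \<inter> E \<inter> S) j)) (Z \<inter> S)"
proof -
  have memE: "v \<in> E \<longleftrightarrow> v \<in> lists A \<and> v \<noteq> [] \<and> last v = a" for v
  proof
    assume "v \<in> lists A \<and> v \<noteq> [] \<and> last v = a"
    then have "v = butlast v @ [a]" "butlast v \<in> lists A"
      by (auto simp: append_butlast_last_id dest: in_set_butlastD)
    then show "v \<in> E" unfolding E_def conc_def by blast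
  qed (use a in \<open>auto simp: E_def conc_def\<close>)
  have memS: "v \<in> S \<longleftrightarrow> v \<in> lists A \<and> v \<noteq> [] \<and> hd v = a" for v
  proof
    assume "v \<in> lists A \<and> v \<noteq> [] \<and> hd v = a"
    then have "v = [a] @ tl v" "tl v \<in> lists A"
      by (auto simp: list.set_sel(2))
    then show "v \<in> S" unfolding S_def conc_def by blast
  qed (use a in \<open>auto simp: S_def conc_def\<close>)
  have memZ: "v \<in> Z \<longleftrightarrow> v \<in> lists A \<and> occ [a,a] v = 0" for v
    unfolding Z_def Count_def by simp
  define QS where "QS j = {v \<in> lists A. occ [a,a] v = j \<and> v \<noteq> [] \<and> last v = a}" for j
  have step: "conc (QS j) T = {v \<in> lists A. occ [a,a] v = Suc j \<and> v \<noteq> [] \<and> (R v)}"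
    if T: "\<And>v. v \<in> T \<longleftrightarrow> v \<in> lists A \<and> occ [a,a] v = 0 \<and> v \<noteq> [] \<and> hd v = a \<and> R v"
    and R: "\<And>q m. R m \<Longrightarrow> m \<noteq> [] \<Longrightarrow> R (q @ m)"
    and R': "\<And>q m. R (q @ m) \<Longrightarrow> m \<noteq> [] \<Longrightarrow> R m"
    for j T R
  proof
    show "conc (QS j) T \<subseteq> {v \<in> lists A. occ [a,a] v = Suc j \<and> v \<noteq> [] \<and> (R v)}"
    proof
      fix v assume "v \<in> conc (QS j) T"
      then obtain q m where qm: "v = q @ m" "q \<in> QS j" "m \<in> T" unfolding conc_def by auto
      then show "v \<in> {v \<in> lists A. occ [a,a] v = Suc j \<and> v \<noteq> [] \<and> (R v)}"
        using occ_aa_split[of q m a] T[of m] R[of m q] unfolding QS_def by auto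
    qed
  next
    show "{v \<in> lists A. occ [a,a] v = Suc j \<and> v \<noteq> [] \<and> (R v)} \<subseteq> conc (QS j) T"
    proof
      fix v assume v: "v \<in> {v \<in> lists A. occ [a,a] v = Suc j \<and> v \<noteq> [] \<and> (R v)}"
      then obtain x y where xy: "v = x @ [a,a] @ y" "occ [a,a] (tl ([a,a] @ y)) = 0"
        using last_occ[of "[a,a]" v] by auto
      define q where "q = x @ [a]"
      define m where "m = a # y"
      have vqm: "v = q @ m" using xy unfolding q_def m_def by simp
      have o: "occ [a,a] m = 0" using xy(2) unfolding m_def by simp
      have "occ [a,a] q = j" using occ_aa_split[of q m a] v vqm o unfolding q_def m_def by simp
      then have "q \<in> QS j" using v vqm unfolding QS_def q_def by auto
      moreover have "m \<in> T" using T[of m] o v vqm R'[of q m] unfolding m_def by auto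
      ultimately show "v \<in> conc (QS j) T" using vqm unfolding conc_def by blast
    qed
  qed
  have Q: "conc (Z \<inter> E) (pw (Z \<inter> E \<inter> S) j) = QS j" for j
  proof (induction j)
    case 0 then show ?case unfolding QS_def using memZ memE by auto
  next
    case (Suc j)
    have "conc (Z \<inter> E) (pw (Z \<inter> E \<inter> S) (Suc j)) = conc (QS j) (Z \<inter> E \<inter> S)"
      using Suc by (simp add: conc_assoc[symmetric])
    also have "\<dots> = {v \<in> lists A. occ [a,a] v = Suc j \<and> v \<noteq> [] \<and> last v = a}"
      by (rule step) (auto simp: memZ memE memS)
    finally show ?case unfolding QS_def .
  qed
  have "conc (QS j) (Z \<inter> S) = {v \<in> lists A. occ [a,a] v = Suc j \<and> v \<noteq> [] \<and> True}"
    by (rule step) (auto simp: memZ memS)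
  also have "\<dots> = Count A [a,a] (Suc j)" unfolding Count_def by (auto simp: occ_Nil)
  finally show ?thesis using Q by simp
qed

lemma no_case:
  assumes "w \<in> lists A" "w \<noteq> []"
    and no: "\<And>u z. occ w (u @ w @ z) = occ w u + 1 + occ w z"
  shows "(\<forall>k. sf A (Count A w k)) \<and> (\<forall>n k. 2 \<le> n \<longrightarrow> k < n \<longrightarrow> h1 A (ModCount A w k n))"
  by (rule assemble[OF _ _ _ _ refl case_no[OF assms]])
     (simp_all add: sf_Count0 sf_conc sf_word assms)

theorem proposition2p4:
  fixes A :: "'a set" and w :: "'a list"
  assumes "finite A"
    and "w \<in> lists A" and "w \<noteq> []" and "length w \<le> 2"
  shows "(\<forall>k. star_height A (Count A w k) = 0)
       \<and> (\<forall>n k. 2 \<le> n \<longrightarrow> k < n \<longrightarrow> star_height A (ModCount A w k n) \<le> 1)"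
proof -
  have main: "(\<forall>k. sf A (Count A w k)) \<and> (\<forall>n k. 2 \<le> n \<longrightarrow> k < n \<longrightarrow> h1 A (ModCount A w k n))"
  proof -
    obtain a w' where w: "w = a # w'" using assms(3) by (cases w) auto
    show ?thesis
    proof (cases w')
      case Nil
      show ?thesis
      proof (rule no_case[OF assms(2,3)])
        fix u z show "occ w (u @ w @ z) = occ w u + 1 + occ w z"
          using w Nil by (simp add: occ1_app occ_Cons occ_Nil)
      qed
    next
      case (Cons b w'')
      then have wab: "w = [a,b]" using w assms(4) by auto
      show ?thesis
      proof (cases "a = b")
        case False
        show ?thesis
        proof (rule no_case[OF assms(2,3)])
          fix u z show "occ w (u @ w @ z) = occ w u + 1 + occ w z"
            using wab False by (simp add: occ2_app occ_Cons occ_Nil)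
        qed
      next
        case True
        have aA: "a \<in> A" using assms(2) wab by auto
        let ?Z = "Count A [a,a] 0"
        let ?E = "conc (lists A) {[a]}"
        let ?S = "conc {[a]} (lists A)"
        have sfs: "sf A ?Z" "sf A ?E" "sf A ?S"
          using assms(2) wab True aA by (simp_all add: sf_Count0 sf_conc sf_lists sf_letter)
        have waa: "w = [a,a]" using wab True by simp
        show ?thesis unfolding waa
          by (rule assemble[OF _ _ _ _ refl case_aa[OF aA]])
             (simp_all add: sfs sf_inter)
      qed
    qed
  qed
  then show ?thesis using sf_sh h1_sh by blast
qed

end
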